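(* Let $(A,\mu,\alpha,\beta)$ be a BiHom-associative algebra and let $r=\sum_i x_i\otimes y_i\in A\otimes A$ be such that $(\alpha\otimes\alpha)(r)=r=(\beta\otimes\beta)(r)$. Define $\Delta_r:A\rightarrow A\otimes A$ by $\Delta_r(a)=\sum_i\alpha(x_i)\otimes y_i\cdot a-\sum_i a\cdot x_i\otimes\beta(y_i)$. Then $(\Delta_r\otimes\beta)\circ\Delta_r=(\alpha\otimes\Delta_r)\circ\Delta_r$ if and only if $a\bullet A(r)=A(r)\bullet a$ for all $a\in A$, where the actions of $A$ on $A\otimes A\otimes A$ are $a\bullet(x\otimes y\otimes z)=\alpha(a)\cdot x\otimes\beta(y)\otimes\beta(z)$ and $(x\otimes y\otimes z)\bullet a=\alpha(x)\otimes\alpha(y)\otimes z\cdot\beta(a)$, and $A(r)=r_{13}r_{12}-r_{12}r_{23}+r_{23}r_{13}$ with $r_{12}r_{23}=\sum_{i,j}\alpha(x_i)\otimes y_i\cdot x_j\otimes\beta(y_j)$, $r_{13}r_{12}=\sum_{i,j}x_i\cdot x_j\otimes\beta(y_j)\otimes\beta(y_i)$, $r_{23}r_{13}=\sum_{i,j}\alpha(x_i)\otimes\alpha(x_j)\otimes y_j\cdot y_i$.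
   Context: A BiHom-associative algebra is a 4-tuple $(A,\mu,\alpha,\beta)$ with $A$ a linear space, $\alpha,\beta:A\to A$ and $\mu:A\otimes A\to A$ (written $\mu(x\otimes y)=x\cdot y$) linear maps such that $\alpha\circ\beta=\beta\circ\alpha$, $\alpha(x\cdot y)=\alpha(x)\cdot\alpha(y)$, $\beta(x\cdot y)=\beta(x)\cdot\beta(y)$ and $\alpha(x)\cdot(y\cdot z)=(x\cdot y)\cdot\beta(z)$ for all $x,y,z\in A$. Work is over a base field $\Bbbk$, and $\otimes=\otimes_{\Bbbk}$. *)

theory Defs
  imports Main "HOL.Vector_Spaces" "HOL-Library.Function_Algebras"
begin

text \<open>Tensor products over a field 'k of a 'k-vector space (type 'a with scalar
multiplication smul) are modelled as the free 'k-vector space on tuples, modulo the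
subspace spanned by the multilinearity relations.  A tensor is represented by a
finite formal sum, i.e. a list of (coefficient, tuple) pairs.\<close>

definition fsum :: "('k::comm_ring_1 \<times> 'b) list \<Rightarrow> ('b \<Rightarrow> 'k)" where
  "fsum xs = (\<lambda>p. sum_list (map (\<lambda>(c,q). if q = p then c else 0) xs))"

definition fscale :: "'k::comm_ring_1 \<Rightarrow> ('b \<Rightarrow> 'k) \<Rightarrow> ('b \<Rightarrow> 'k)" where
  "fscale c f = (\<lambda>p. c * f p)"

definition rel2 :: "('k::field \<Rightarrow> 'a::ab_group_add \<Rightarrow> 'a) \<Rightarrow> (('a \<times> 'a) \<Rightarrow> 'k) set" where
  "rel2 s =
     {fsum [(1,(x+x',y)),(-1,(x,y)),(-1,(x',y))] | x x' y. True}
   \<union> {fsum [(1,(x,y+y')),(-1,(x,y)),(-1,(x,y'))] | x y y'. True}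
   \<union> {fsum [(1,(s c x,y)),(-c,(x,y))] | c x y. True}
   \<union> {fsum [(1,(x,s c y)),(-c,(x,y))] | c x y. True}"

definition rel3 :: "('k::field \<Rightarrow> 'a::ab_group_add \<Rightarrow> 'a) \<Rightarrow> (('a \<times> 'a \<times> 'a) \<Rightarrow> 'k) set" where
  "rel3 s =
     {fsum [(1,(x+x',y,z)),(-1,(x,y,z)),(-1,(x',y,z))] | x x' y z. True}
   \<union> {fsum [(1,(x,y+y',z)),(-1,(x,y,z)),(-1,(x,y',z))] | x y y' z. True}
   \<union> {fsum [(1,(x,y,z+z')),(-1,(x,y,z)),(-1,(x,y,z'))] | x y z z'. True}
   \<union> {fsum [(1,(s c x,y,z)),(-c,(x,y,z))] | c x y z. True}
   \<union> {fsum [(1,(x,s c y,z)),(-c,(x,y,z))] | c x y z. True}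
   \<union> {fsum [(1,(x,y,s c z)),(-c,(x,y,z))] | c x y z. True}"

definition tens2_eq :: "('k::field \<Rightarrow> 'a::ab_group_add \<Rightarrow> 'a) \<Rightarrow> ('k \<times> 'a \<times> 'a) list \<Rightarrow> ('k \<times> 'a \<times> 'a) list \<Rightarrow> bool" where
  "tens2_eq s u v \<longleftrightarrow> fsum u - fsum v \<in> module.span fscale (rel2 s)"

definition tens3_eq :: "('k::field \<Rightarrow> 'a::ab_group_add \<Rightarrow> 'a) \<Rightarrow> ('k \<times> 'a \<times> 'a \<times> 'a) list \<Rightarrow> ('k \<times> 'a \<times> 'a \<times> 'a) list \<Rightarrow> bool" where
  "tens3_eq s u v \<longleftrightarrow> fsum u - fsum v \<in> module.span fscale (rel3 s)"

definition bihom_assoc :: "('k::field \<Rightarrow> 'a::ab_group_add \<Rightarrow> 'a) \<Rightarrow> ('a \<Rightarrow> 'a \<Rightarrow> 'a) \<Rightarrow> ('a \<Rightarrow> 'a) \<Rightarrow> ('a \<Rightarrow> 'a) \<Rightarrow> bool" where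
  "bihom_assoc s mu \<alpha> \<beta> \<longleftrightarrow>
     vector_space s \<and>
     (\<forall>x. Vector_Spaces.linear s s (mu x)) \<and> (\<forall>y. Vector_Spaces.linear s s (\<lambda>x. mu x y)) \<and>
     Vector_Spaces.linear s s \<alpha> \<and> Vector_Spaces.linear s s \<beta> \<and>
     \<alpha> \<circ> \<beta> = \<beta> \<circ> \<alpha> \<and>
     (\<forall>x y. \<alpha> (mu x y) = mu (\<alpha> x) (\<alpha> y)) \<and>
     (\<forall>x y. \<beta> (mu x y) = mu (\<beta> x) (\<beta> y)) \<and>
     (\<forall>x y z. mu (\<alpha> x) (mu y z) = mu (mu x y) (\<beta> z))"

text \<open>r = \<Sum>_i x_i \<otimes> y_i is given by the list of pairs (x_i, y_i).\<close>
definition tens_of :: "('a \<times> 'a) list \<Rightarrow> ('k::field \<times> 'a \<times> 'a) list" where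
  "tens_of r = map (\<lambda>(x,y). (1,(x,y))) r"

definition Delta_r :: "('a \<Rightarrow> 'a \<Rightarrow> 'a) \<Rightarrow> ('a \<Rightarrow> 'a) \<Rightarrow> ('a \<Rightarrow> 'a) \<Rightarrow> ('a \<times> 'a) list \<Rightarrow> 'a \<Rightarrow> ('k::field \<times> 'a \<times> 'a) list" where
  "Delta_r mu \<alpha> \<beta> r a =
     map (\<lambda>(x,y). (1, (\<alpha> x, mu y a))) r @ map (\<lambda>(x,y). (-1, (mu a x, \<beta> y))) r"

definition Delta_beta :: "('a \<Rightarrow> 'a \<Rightarrow> 'a) \<Rightarrow> ('a \<Rightarrow> 'a) \<Rightarrow> ('a \<Rightarrow> 'a) \<Rightarrow> ('a \<times> 'a) list \<Rightarrow> 'a \<Rightarrow> ('k::field \<times> 'a \<times> 'a \<times> 'a) list" where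
  "Delta_beta mu \<alpha> \<beta> r a =
     concat (map (\<lambda>(c,(u,v)). map (\<lambda>(d,(p,q)). (c*d, (p, q, \<beta> v))) (Delta_r mu \<alpha> \<beta> r u))
                 (Delta_r mu \<alpha> \<beta> r a))"

definition alpha_Delta :: "('a \<Rightarrow> 'a \<Rightarrow> 'a) \<Rightarrow> ('a \<Rightarrow> 'a) \<Rightarrow> ('a \<Rightarrow> 'a) \<Rightarrow> ('a \<times> 'a) list \<Rightarrow> 'a \<Rightarrow> ('k::field \<times> 'a \<times> 'a \<times> 'a) list" where
  "alpha_Delta mu \<alpha> \<beta> r a =
     concat (map (\<lambda>(c,(u,v)). map (\<lambda>(d,(p,q)). (c*d, (\<alpha> u, p, q))) (Delta_r mu \<alpha> \<beta> r v))
                 (Delta_r mu \<alpha> \<beta> r a))"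

definition AYBE :: "('a \<Rightarrow> 'a \<Rightarrow> 'a) \<Rightarrow> ('a \<Rightarrow> 'a) \<Rightarrow> ('a \<Rightarrow> 'a) \<Rightarrow> ('a \<times> 'a) list \<Rightarrow> ('k::field \<times> 'a \<times> 'a \<times> 'a) list" where
  "AYBE mu \<alpha> \<beta> r =
     concat (map (\<lambda>(xi,yi). map (\<lambda>(xj,yj). (1, (mu xi xj, \<beta> yj, \<beta> yi))) r) r)
   @ concat (map (\<lambda>(xi,yi). map (\<lambda>(xj,yj). (-1, (\<alpha> xi, mu yi xj, \<beta> yj))) r) r)
   @ concat (map (\<lambda>(xi,yi). map (\<lambda>(xj,yj). (1, (\<alpha> xi, \<alpha> xj, mu yj yi))) r) r)"

definition lact :: "('a \<Rightarrow> 'a \<Rightarrow> 'a) \<Rightarrow> ('a \<Rightarrow> 'a) \<Rightarrow> ('a \<Rightarrow> 'a) \<Rightarrow> 'a \<Rightarrow> ('k \<times> 'a \<times> 'a \<times> 'a) list \<Rightarrow> ('k \<times> 'a \<times> 'a \<times> 'a) list" where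
  "lact mu \<alpha> \<beta> a t = map (\<lambda>(c,(x,y,z)). (c, (mu (\<alpha> a) x, \<beta> y, \<beta> z))) t"

definition ract :: "('a \<Rightarrow> 'a \<Rightarrow> 'a) \<Rightarrow> ('a \<Rightarrow> 'a) \<Rightarrow> ('a \<Rightarrow> 'a) \<Rightarrow> ('k \<times> 'a \<times> 'a \<times> 'a) list \<Rightarrow> 'a \<Rightarrow> ('k \<times> 'a \<times> 'a \<times> 'a) list" where
  "ract mu \<alpha> \<beta> t a = map (\<lambda>(c,(x,y,z)). (c, (\<alpha> x, \<alpha> y, mu z (\<beta> a)))) t"

end

theory Submission
  imports Defs
begin

lemma fsum_Nil[simp]: "fsum [] = 0"
  by (simp add: fsum_def fun_eq_iff)

lemma fsum_Cons: "fsum ((c,p)#xs) = (\<lambda>q. if p = q then c else 0) + fsum xs"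
  by (simp add: fsum_def fun_eq_iff)

lemma fsum_append[simp]: "fsum (xs @ ys) = fsum xs + fsum ys"
  by (simp add: fsum_def fun_eq_iff)

lemma fsum_concat: "fsum (concat xss) = sum_list (map fsum xss)"
  by (induction xss) auto

lemma module_fscale: "module (fscale :: 'k::comm_ring_1 \<Rightarrow> ('b \<Rightarrow> 'k) \<Rightarrow> _)"
  by unfold_locales (auto simp: fscale_def fun_eq_iff algebra_simps)

definition pushv :: "('a \<Rightarrow> 'a \<Rightarrow> 'c) \<Rightarrow> ('k \<times> 'a \<times> 'a) list \<Rightarrow> ('k \<times> 'c) list" where
  "pushv t u = map (\<lambda>(c,(x,y)). (c, t x y)) u"

lemma pushv_sum_aux:
  fixes w :: "('k::comm_ring_1 \<times> 'a \<times> 'a) list"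
  assumes "finite P" "snd ` set w \<subseteq> P"
  shows "fsum (pushv t w) q = (\<Sum>p\<in>P. fsum w p * (if case_prod t p = q then 1 else 0))"
  using assms(2)
proof (induction w)
  case Nil
  then show ?case by (simp add: pushv_def)
next
  case (Cons a w)
  obtain c p0 where a: "a = (c,p0)" by (cases a)
  have p0: "p0 \<in> P" using Cons.prems a by auto
  have IH: "fsum (pushv t w) q = (\<Sum>p\<in>P. fsum w p * (if case_prod t p = q then 1 else 0))"
    using Cons by auto
  have "(\<Sum>p\<in>P. fsum (a#w) p * (if case_prod t p = q then 1 else 0))
      = (\<Sum>p\<in>P. (if p0 = p then c else 0) * (if case_prod t p = q then 1 else 0))
        + (\<Sum>p\<in>P. fsum w p * (if case_prod t p = q then 1 else 0))"
    by (simp add: a fsum_Cons algebra_simps sum.distrib)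
  also have "(\<Sum>p\<in>P. (if p0 = p then c else 0) * (if case_prod t p = q then 1 else 0))
      = c * (if case_prod t p0 = q then 1 else 0)"
  proof -
    have "(\<Sum>p\<in>P. (if p0 = p then c else 0) * (if case_prod t p = q then 1 else 0))
       = (\<Sum>p\<in>P. (if p0 = p then c * (if case_prod t p0 = q then 1 else 0) else 0))"
      by (rule sum.cong) auto
    also have "\<dots> = c * (if case_prod t p0 = q then 1 else 0)"
      using p0 assms(1) by (simp add: sum.delta sum.delta')
    finally show ?thesis .
  qed
  finally show ?case using IH
    by (cases p0) (simp add: a pushv_def fsum_Cons)
qed

lemma pushv_zero:
  fixes w :: "('k::comm_ring_1 \<times> 'a \<times> 'a) list"
  assumes "fsum w = 0" shows "fsum (pushv t w) = 0"
proof
  fix q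
  show "fsum (pushv t w) q = 0 q"
    using pushv_sum_aux[of "snd ` set w" w t q] assms by simp
qed

lemma pushv_append[simp]: "pushv t (u @ v) = pushv t u @ pushv t v"
  by (simp add: pushv_def)

definition negl :: "('k::comm_ring_1 \<times> 'b) list \<Rightarrow> ('k \<times> 'b) list" where
  "negl u = map (\<lambda>(c,p). (-c,p)) u"

lemma fsum_negl[simp]: "fsum (negl u) = - fsum u"
  by (induction u) (auto simp: negl_def fsum_Cons)

lemma pushv_negl[simp]: "pushv t (negl u) = negl (pushv t u)"
  by (simp add: negl_def pushv_def split_def)

lemma pushv_cong:
  fixes w :: "('k::comm_ring_1 \<times> 'a \<times> 'a) list"
  assumes "fsum w = fsum w'" shows "fsum (pushv t w) = fsum (pushv t w')"
proof -
  have "fsum (w @ negl w') = 0" using assms by simp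
  from pushv_zero[OF this, of t] show ?thesis by simp
qed

definition scl :: "'k::comm_ring_1 \<Rightarrow> ('k \<times> 'b) list \<Rightarrow> ('k \<times> 'b) list" where
  "scl c u = map (\<lambda>(d,p). (c*d,p)) u"

lemma fsum_scl[simp]: "fsum (scl c u) = fscale c (fsum u)"
  by (induction u) (auto simp: scl_def fsum_Cons fscale_def fun_eq_iff algebra_simps)

lemma pushv_scl[simp]: "pushv t (scl c u) = scl c (pushv t u)"
  by (simp add: scl_def pushv_def split_def)

abbreviation S2 :: "('k::field \<Rightarrow> 'a::ab_group_add \<Rightarrow> 'a) \<Rightarrow> (('a \<times> 'a) \<Rightarrow> 'k) set" where
  "S2 s \<equiv> module.span fscale (rel2 s)"
abbreviation S3 :: "('k::field \<Rightarrow> 'a::ab_group_add \<Rightarrow> 'a) \<Rightarrow> (('a \<times> 'a \<times> 'a) \<Rightarrow> 'k) set" where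
  "S3 s \<equiv> module.span fscale (rel3 s)"

lemmas sp_add = module.span_add[OF module_fscale]
lemmas sp_diff = module.span_diff[OF module_fscale]
lemmas sp_neg = module.span_neg[OF module_fscale]
lemmas sp_zero = module.span_zero[OF module_fscale]
lemmas sp_base = module.span_base[OF module_fscale]
lemmas sp_scale = module.span_scale[OF module_fscale]

definition sep :: "('k::field \<Rightarrow> 'a::ab_group_add \<Rightarrow> 'a) \<Rightarrow> ('a \<Rightarrow> 'a \<Rightarrow> 'a \<times> 'a \<times> 'a) \<Rightarrow> bool" where
  "sep s t \<longleftrightarrow>
    (\<forall>x x' y. fsum [(1::'k, t (x+x') y), (-1, t x y), (-1, t x' y)] \<in> S3 s)
  \<and> (\<forall>x y y'. fsum [(1::'k, t x (y+y')), (-1, t x y), (-1, t x y')] \<in> S3 s)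
  \<and> (\<forall>c x y. fsum [(1::'k, t (s c x) y), (-c, t x y)] \<in> S3 s)
  \<and> (\<forall>c x y. fsum [(1::'k, t x (s c y)), (-c, t x y)] \<in> S3 s)"

lemma sep_rep:
  assumes x: "x \<in> S2 s" and t: "sep s t"
  shows "\<exists>L. fsum L = x \<and> fsum (pushv t L) \<in> S3 s"
  using x
proof (induction rule: module.span_induct_alt[OF module_fscale, consumes 1, case_names base step])
  case base
  show ?case by (rule exI[of _ "[]"]) (use sp_zero[of "rel3 s"] in \<open>simp add: pushv_def zero_fun_def\<close>)
next
  case (step c g y)
  from step(2) obtain L where L: "fsum L = y" "fsum (pushv t L) \<in> S3 s" by blast
  from step(1) obtain l where l: "g = fsum l" "fsum (pushv t l) \<in> S3 s"
    using t unfolding rel2_def sep_def by (auto simp: pushv_def)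
  show ?case
  proof (rule exI[of _ "scl c l @ L"], rule conjI)
    show "fsum (scl c l @ L) = fscale c g + y" using L l by (simp only: fsum_append fsum_scl)
    have "fsum (pushv t (scl c l @ L)) = fscale c (fsum (pushv t l)) + fsum (pushv t L)"
      by (simp only: pushv_append fsum_append pushv_scl fsum_scl)
    then show "fsum (pushv t (scl c l @ L)) \<in> S3 s" using L l
      by (simp only:) (intro sp_add sp_scale)
  qed
qed

lemma subst_main:
  assumes "tens2_eq s u v" "sep s t"
  shows "fsum (pushv t u) - fsum (pushv t v) \<in> S3 s"
proof -
  obtain L where L: "fsum L = fsum u - fsum v" "fsum (pushv t L) \<in> S3 s"
    using sep_rep[OF assms(1)[unfolded tens2_eq_def] assms(2)] by blast
  have "fsum u = fsum (v @ L)" using L by simp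
  then have "fsum (pushv t u) = fsum (pushv t (v @ L))" by (rule pushv_cong)
  then show ?thesis using L by simp
qed

definition lin :: "('k \<Rightarrow> 'a::ab_group_add \<Rightarrow> 'a) \<Rightarrow> ('a \<Rightarrow> 'a) \<Rightarrow> bool" where
  "lin s f \<longleftrightarrow> (\<forall>x y. f (x+y) = f x + f y) \<and> (\<forall>c x. f (s c x) = s c (f x))"

lemma r3_1: "fsum [(1::'k::field,(a+b,c,d)),(-1,(a,c,d)),(-1,(b,c,d))] \<in> S3 s"
  by (rule sp_base) (unfold rel3_def, rule UnI1, rule UnI1, rule UnI1, rule UnI1, rule UnI1, auto)
lemma r3_2: "fsum [(1::'k::field,(c,a+b,d)),(-1,(c,a,d)),(-1,(c,b,d))] \<in> S3 s"
  by (rule sp_base) (unfold rel3_def, rule UnI1, rule UnI1, rule UnI1, rule UnI1, rule UnI2, auto)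
lemma r3_3: "fsum [(1::'k::field,(c,d,a+b)),(-1,(c,d,a)),(-1,(c,d,b))] \<in> S3 s"
  by (rule sp_base) (unfold rel3_def, rule UnI1, rule UnI1, rule UnI1, rule UnI2, auto)
lemma r3_4: "fsum [(1::'k::field,(s k a,c,d)),(-k,(a,c,d))] \<in> S3 s"
  by (rule sp_base) (unfold rel3_def, rule UnI1, rule UnI1, rule UnI2, auto)
lemma r3_5: "fsum [(1::'k::field,(c,s k a,d)),(-k,(c,a,d))] \<in> S3 s"
  by (rule sp_base) (unfold rel3_def, rule UnI1, rule UnI2, auto)
lemma r3_6: "fsum [(1::'k::field,(c,d,s k a)),(-k,(c,d,a))] \<in> S3 s"
  by (rule sp_base) (unfold rel3_def, rule UnI2, auto)

lemma sep12:
  assumes "lin s f" "lin s g"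
  shows "sep s (\<lambda>x y. (f x, g y, h))"
  using assms unfolding sep_def lin_def
  by (simp add: r3_1 r3_2 r3_4 r3_5)

lemma sep23:
  assumes "lin s f" "lin s g"
  shows "sep s (\<lambda>x y. (h, f x, g y))"
  using assms unfolding sep_def lin_def
  by (simp add: r3_2 r3_3 r3_5 r3_6)

definition NN :: "('a\<times>'a) list \<Rightarrow> ('a\<times>'a) list \<Rightarrow> ('a\<Rightarrow>'a\<Rightarrow>'a\<Rightarrow>'a\<Rightarrow>'a\<times>'a\<times>'a) \<Rightarrow> ('a\<times>'a\<times>'a \<Rightarrow> 'k::comm_ring_1)" where
  "NN r1 r2 T = sum_list (map (\<lambda>(xi,yi). fsum (map (\<lambda>(xj,yj). (1, T xi yi xj yj)) r2)) r1)"

lemma NN_inner: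
  assumes "\<And>xi yi. sep s (T xi yi)"
    and "tens2_eq s (tens_of (map (\<lambda>(x,y). (f x, f y)) r)) (tens_of r :: ('k::field \<times> 'a::ab_group_add \<times> 'a) list)"
  shows "NN r1 r (\<lambda>xi yi xj yj. T xi yi (f xj) (f yj)) - (NN r1 r T :: _ \<Rightarrow> 'k) \<in> S3 s"
proof (induction r1)
  case Nil
  then show ?case using sp_zero[of "rel3 s"] by (simp add: NN_def zero_fun_def)
next
  case (Cons p r1)
  obtain xi yi where p: "p = (xi,yi)" by (cases p)
  have 1: "pushv (T xi yi) (tens_of (map (\<lambda>(x,y). (f x, f y)) r) :: ('k \<times> _) list)
     = map (\<lambda>(xj,yj). (1, T xi yi (f xj) (f yj))) r"
    by (simp add: pushv_def tens_of_def split_def)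
  have 2: "pushv (T xi yi) (tens_of r :: ('k \<times> _) list) = map (\<lambda>(xj,yj). (1, T xi yi xj yj)) r"
    by (simp add: pushv_def tens_of_def split_def)
  have "fsum (map (\<lambda>(xj,yj). (1::'k, T xi yi (f xj) (f yj))) r) - fsum (map (\<lambda>(xj,yj). (1::'k, T xi yi xj yj)) r) \<in> S3 s"
    using subst_main[OF assms(2) assms(1)[of xi yi]] unfolding 1 2 .
  note A = sp_add[OF this Cons.IH]
  have eq: "NN (p#r1) r (\<lambda>xi yi xj yj. T xi yi (f xj) (f yj)) - (NN (p#r1) r T :: _ \<Rightarrow> 'k) =
     (fsum (map (\<lambda>(xj,yj). (1::'k, T xi yi (f xj) (f yj))) r) - fsum (map (\<lambda>(xj,yj). (1::'k, T xi yi xj yj)) r))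
     + (NN r1 r (\<lambda>xi yi xj yj. T xi yi (f xj) (f yj)) - (NN r1 r T :: _ \<Rightarrow> 'k))"
    by (simp add: NN_def p fun_eq_iff)
  show ?case unfolding eq by (rule A)
qed

lemma fsum_map_single: "fsum (map g xs) = sum_list (map (\<lambda>x. fsum [g x]) xs)"
proof (induction xs)
  case (Cons a xs)
  then show ?case by (cases "g a") (simp add: fsum_Cons)
qed simp

lemma sum_list_swap:
  "sum_list (map (\<lambda>x. sum_list (map (\<lambda>y. F x y) ys)) xs)
   = (sum_list (map (\<lambda>y. sum_list (map (\<lambda>x. F x y) xs)) ys) :: 'b::comm_monoid_add)"
  by (induction xs) (simp_all add: sum_list_addf)

lemma NN_swap: "NN r1 r2 T = NN r2 r1 (\<lambda>xi yi xj yj. T xj yj xi yi)"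
  unfolding NN_def
  apply (subst (1 2) fsum_map_single)
  apply (simp add: split_def)
  apply (rule sum_list_swap)
  done

lemma NN_outer:
  assumes "\<And>xj yj. sep s (\<lambda>xi yi. T xi yi xj yj)"
    and "tens2_eq s (tens_of (map (\<lambda>(x,y). (f x, f y)) r)) (tens_of r :: ('k::field \<times> 'a::ab_group_add \<times> 'a) list)"
  shows "NN r r (\<lambda>xi yi xj yj. T (f xi) (f yi) xj yj) - (NN r r T :: _ \<Rightarrow> 'k) \<in> S3 s"
  using NN_inner[of s "\<lambda>xi yi xj yj. T xj yj xi yi", OF assms(1) assms(2), of r]
  by (subst (1 2) NN_swap) simp

lemma fsum_map_neg: "fsum (map (\<lambda>x. (- c x, g x)) xs) = - fsum (map (\<lambda>x. (c x, g x)) xs)"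
  by (induction xs) (auto simp: fsum_Cons fun_eq_iff)

lemma NN_alt: "NN r1 r2 T = sum_list (map (\<lambda>p. fsum (map (\<lambda>q. (1, T (fst p) (snd p) (fst q) (snd q))) r2)) r1)"
  by (simp add: NN_def split_def)

lemma sum_list_neg': "sum_list (map (\<lambda>x. - f x) xs) = - (sum_list (map f xs) :: 'b::ab_group_add)"
  by (induction xs) simp_all

lemma norm_Db:
  "(fsum (Delta_beta mu \<alpha> \<beta> r a) :: _ \<Rightarrow> 'k::field) =
     NN r r (\<lambda>xi yi xj yj. (\<alpha> xj, mu yj (\<alpha> xi), \<beta> (mu yi a)))
   - NN r r (\<lambda>xi yi xj yj. (mu (\<alpha> xi) xj, \<beta> yj, \<beta> (mu yi a)))
   - NN r r (\<lambda>xi yi xj yj. (\<alpha> xj, mu yj (mu a xi), \<beta> (\<beta> yi)))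
   + NN r r (\<lambda>xi yi xj yj. (mu (mu a xi) xj, \<beta> yj, \<beta> (\<beta> yi)))"
  unfolding Delta_beta_def Delta_r_def NN_alt
  by (simp add: fsum_concat map_map o_def split_def fsum_map_neg sum_list_addf sum_list_subtractf sum_list_neg' fun_eq_iff)

lemma norm_aD:
  "(fsum (alpha_Delta mu \<alpha> \<beta> r a) :: _ \<Rightarrow> 'k::field) =
     NN r r (\<lambda>xi yi xj yj. (\<alpha> (\<alpha> xi), \<alpha> xj, mu yj (mu yi a)))
   - NN r r (\<lambda>xi yi xj yj. (\<alpha> (\<alpha> xi), mu (mu yi a) xj, \<beta> yj))
   - NN r r (\<lambda>xi yi xj yj. (\<alpha> (mu a xi), \<alpha> xj, mu yj (\<beta> yi)))
   + NN r r (\<lambda>xi yi xj yj. (\<alpha> (mu a xi), mu (\<beta> yi) xj, \<beta> yj))"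
  unfolding alpha_Delta_def Delta_r_def NN_alt
  by (simp add: fsum_concat map_map o_def split_def fsum_map_neg sum_list_addf sum_list_subtractf sum_list_neg' fun_eq_iff)

lemma norm_l:
  "(fsum (lact mu \<alpha> \<beta> a (AYBE mu \<alpha> \<beta> r)) :: _ \<Rightarrow> 'k::field) =
     NN r r (\<lambda>xi yi xj yj. (mu (\<alpha> a) (mu xi xj), \<beta> (\<beta> yj), \<beta> (\<beta> yi)))
   - NN r r (\<lambda>xi yi xj yj. (mu (\<alpha> a) (\<alpha> xi), \<beta> (mu yi xj), \<beta> (\<beta> yj)))
   + NN r r (\<lambda>xi yi xj yj. (mu (\<alpha> a) (\<alpha> xi), \<beta> (\<alpha> xj), \<beta> (mu yj yi)))"
  unfolding lact_def AYBE_def NN_alt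
  by (simp add: fsum_concat map_concat map_map o_def split_def fsum_map_neg sum_list_addf sum_list_subtractf sum_list_neg' fun_eq_iff)

lemma norm_r:
  "(fsum (ract mu \<alpha> \<beta> (AYBE mu \<alpha> \<beta> r) a) :: _ \<Rightarrow> 'k::field) =
     NN r r (\<lambda>xi yi xj yj. (\<alpha> (mu xi xj), \<alpha> (\<beta> yj), mu (\<beta> yi) (\<beta> a)))
   - NN r r (\<lambda>xi yi xj yj. (\<alpha> (\<alpha> xi), \<alpha> (mu yi xj), mu (\<beta> yj) (\<beta> a)))
   + NN r r (\<lambda>xi yi xj yj. (\<alpha> (\<alpha> xi), \<alpha> (\<alpha> xj), mu (mu yj yi) (\<beta> a)))"
  unfolding ract_def AYBE_def NN_alt
  by (simp add: fsum_concat map_concat map_map o_def split_def fsum_map_neg sum_list_addf sum_list_subtractf sum_list_neg' fun_eq_iff)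

lemma comb:
  fixes L1 L2 L3 L4 R1 R2 R3 R4 P1 P2 P3 Q1 Q2 Q3 X :: "('a::ab_group_add \<times> 'a \<times> 'a) \<Rightarrow> 'k::field"
  assumes "P1 - L4 \<in> S3 s" "Q3 - R1 \<in> S3 s" "Q1 - L2 \<in> S3 s" "P3 - R3 \<in> S3 s" "P2 - R4 \<in> S3 s"
    "X - R2 \<in> S3 s" "X - L3 \<in> S3 s" "Q2 - L1 \<in> S3 s"
  shows "(L1 - L2 - L3 + L4 - (R1 - R2 - R3 + R4)) - ((P1 - P2 + P3) - (Q1 - Q2 + Q3)) \<in> S3 s"
proof -
  have eq: "(L1 - L2 - L3 + L4 - (R1 - R2 - R3 + R4)) - ((P1 - P2 + P3) - (Q1 - Q2 + Q3))
    = - (P1 - L4) + (Q3 - R1) + (Q1 - L2) + - (P3 - R3) + (P2 - R4) + - (X - R2) + (X - L3) + - (Q2 - L1)"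
    by (simp add: algebra_simps)
  show ?thesis unfolding eq using assms by (intro sp_add sp_neg)
qed

lemma lin_of_linear: "Vector_Spaces.linear s s f \<Longrightarrow> lin s f"
  unfolding lin_def linear_iff by auto

theorem proposition5p4:
  fixes smul :: "'k::field \<Rightarrow> 'a::ab_group_add \<Rightarrow> 'a"
    and mu :: "'a \<Rightarrow> 'a \<Rightarrow> 'a" and \<alpha> \<beta> :: "'a \<Rightarrow> 'a"
    and r :: "('a \<times> 'a) list"
  assumes "bihom_assoc smul mu \<alpha> \<beta>"
    and "tens2_eq smul (tens_of (map (\<lambda>(x,y). (\<alpha> x, \<alpha> y)) r)) (tens_of r :: ('k \<times> 'a \<times> 'a) list)"
    and "tens2_eq smul (tens_of (map (\<lambda>(x,y). (\<beta> x, \<beta> y)) r)) (tens_of r :: ('k \<times> 'a \<times> 'a) list)"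
  shows "(\<forall>a. tens3_eq smul (Delta_beta mu \<alpha> \<beta> r a) (alpha_Delta mu \<alpha> \<beta> r a))
     \<longleftrightarrow> (\<forall>a. tens3_eq smul (lact mu \<alpha> \<beta> a (AYBE mu \<alpha> \<beta> r)) (ract mu \<alpha> \<beta> (AYBE mu \<alpha> \<beta> r) a))"
proof -
  note ba = assms(1)[unfolded bihom_assoc_def]
  have linL: "\<And>x. lin smul (mu x)" and linR: "\<And>y. lin smul (\<lambda>x. mu x y)"
    and lina: "lin smul \<alpha>" and linb: "lin smul \<beta>"
    using ba by (auto intro: lin_of_linear)
  have ha: "\<And>x y. \<alpha> (mu x y) = mu (\<alpha> x) (\<alpha> y)" and hb: "\<And>x y. \<beta> (mu x y) = mu (\<beta> x) (\<beta> y)"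
    and comm: "\<And>x. \<alpha> (\<beta> x) = \<beta> (\<alpha> x)"
    and assoc: "\<And>x y z. mu (\<alpha> x) (mu y z) = mu (mu x y) (\<beta> z)"
    using ba by (auto simp: fun_eq_iff)
  note hA = assms(2) and hB = assms(3)
  have key: "\<And>a. (fsum (Delta_beta mu \<alpha> \<beta> r a) - fsum (alpha_Delta mu \<alpha> \<beta> r a))
      - (fsum (lact mu \<alpha> \<beta> a (AYBE mu \<alpha> \<beta> r)) - fsum (ract mu \<alpha> \<beta> (AYBE mu \<alpha> \<beta> r) a) :: _ \<Rightarrow> 'k)
      \<in> S3 smul"
  proof -
    fix a
    have F1: "NN r r (\<lambda>xi yi xj yj. (mu (\<alpha> a) (mu xi xj), \<beta> (\<beta> yj), \<beta> (\<beta> yi)))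
        - (NN r r (\<lambda>xi yi xj yj. (mu (mu a xi) xj, \<beta> yj, \<beta> (\<beta> yi))) :: _ \<Rightarrow> 'k) \<in> S3 smul"
    proof -
      have "NN r r (\<lambda>xi yi xj yj. (mu (mu a xi) (\<beta> xj), \<beta> (\<beta> yj), \<beta> (\<beta> yi)))
        - (NN r r (\<lambda>xi yi xj yj. (mu (mu a xi) xj, \<beta> yj, \<beta> (\<beta> yi))) :: _ \<Rightarrow> 'k) \<in> S3 smul"
        by (rule NN_inner[where T="\<lambda>xi yi x y. (mu (mu a xi) x, \<beta> y, \<beta> (\<beta> yi))", OF sep12 hB])
          (rule linL, rule linb)
      moreover have "(\<lambda>xi yi xj yj. (mu (mu a xi) (\<beta> xj), \<beta> (\<beta> yj), \<beta> (\<beta> yi)))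
          = (\<lambda>xi yi xj yj. (mu (\<alpha> a) (mu xi xj), \<beta> (\<beta> yj), \<beta> (\<beta> yi)))"
        by (simp add: assoc)
      ultimately show ?thesis by simp
    qed
    have F2: "NN r r (\<lambda>xi yi xj yj. (\<alpha> (\<alpha> xi), \<alpha> (\<alpha> xj), mu (mu yj yi) (\<beta> a)))
        - (NN r r (\<lambda>xi yi xj yj. (\<alpha> (\<alpha> xi), \<alpha> xj, mu yj (mu yi a))) :: _ \<Rightarrow> 'k) \<in> S3 smul"
    proof -
      have "NN r r (\<lambda>xi yi xj yj. (\<alpha> (\<alpha> xi), \<alpha> (\<alpha> xj), mu (\<alpha> yj) (mu yi a)))
        - (NN r r (\<lambda>xi yi xj yj. (\<alpha> (\<alpha> xi), \<alpha> xj, mu yj (mu yi a))) :: _ \<Rightarrow> 'k) \<in> S3 smul"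
        by (rule NN_inner[where T="\<lambda>xi yi x y. (\<alpha> (\<alpha> xi), \<alpha> x, mu y (mu yi a))", OF sep23 hA])
          (rule lina, rule linR)
      moreover have "(\<lambda>xi yi xj yj. (\<alpha> (\<alpha> xi), \<alpha> (\<alpha> xj), mu (\<alpha> yj) (mu yi a)))
          = (\<lambda>xi yi xj yj. (\<alpha> (\<alpha> xi), \<alpha> (\<alpha> xj), mu (mu yj yi) (\<beta> a)))"
        by (simp add: assoc)
      ultimately show ?thesis by simp
    qed
    have F3: "NN r r (\<lambda>xi yi xj yj. (\<alpha> (mu xi xj), \<alpha> (\<beta> yj), mu (\<beta> yi) (\<beta> a)))
        - (NN r r (\<lambda>xi yi xj yj. (mu (\<alpha> xi) xj, \<beta> yj, \<beta> (mu yi a))) :: _ \<Rightarrow> 'k) \<in> S3 smul"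
    proof -
      have "NN r r (\<lambda>xi yi xj yj. (mu (\<alpha> xi) (\<alpha> xj), \<beta> (\<alpha> yj), \<beta> (mu yi a)))
        - (NN r r (\<lambda>xi yi xj yj. (mu (\<alpha> xi) xj, \<beta> yj, \<beta> (mu yi a))) :: _ \<Rightarrow> 'k) \<in> S3 smul"
        by (rule NN_inner[where T="\<lambda>xi yi x y. (mu (\<alpha> xi) x, \<beta> y, \<beta> (mu yi a))", OF sep12 hA])
          (rule linL, rule linb)
      moreover have "(\<lambda>xi yi xj yj. (mu (\<alpha> xi) (\<alpha> xj), \<beta> (\<alpha> yj), \<beta> (mu yi a)))
          = (\<lambda>xi yi xj yj. (\<alpha> (mu xi xj), \<alpha> (\<beta> yj), mu (\<beta> yi) (\<beta> a)))"
        by (simp add: ha hb comm)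
      ultimately show ?thesis by simp
    qed
    have F4: "NN r r (\<lambda>xi yi xj yj. (mu (\<alpha> a) (\<alpha> xi), \<beta> (\<alpha> xj), \<beta> (mu yj yi)))
        - (NN r r (\<lambda>xi yi xj yj. (\<alpha> (mu a xi), \<alpha> xj, mu yj (\<beta> yi))) :: _ \<Rightarrow> 'k) \<in> S3 smul"
    proof -
      have "NN r r (\<lambda>xi yi xj yj. (\<alpha> (mu a xi), \<alpha> (\<beta> xj), mu (\<beta> yj) (\<beta> yi)))
        - (NN r r (\<lambda>xi yi xj yj. (\<alpha> (mu a xi), \<alpha> xj, mu yj (\<beta> yi))) :: _ \<Rightarrow> 'k) \<in> S3 smul"
        by (rule NN_inner[where T="\<lambda>xi yi x y. (\<alpha> (mu a xi), \<alpha> x, mu y (\<beta> yi))", OF sep23 hB])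
          (rule lina, rule linR)
      moreover have "(\<lambda>xi yi xj yj. (\<alpha> (mu a xi), \<alpha> (\<beta> xj), mu (\<beta> yj) (\<beta> yi)))
          = (\<lambda>xi yi xj yj. (mu (\<alpha> a) (\<alpha> xi), \<beta> (\<alpha> xj), \<beta> (mu yj yi)))"
        by (simp add: ha hb comm)
      ultimately show ?thesis by simp
    qed
    have F5: "NN r r (\<lambda>xi yi xj yj. (mu (\<alpha> a) (\<alpha> xi), \<beta> (mu yi xj), \<beta> (\<beta> yj)))
        - (NN r r (\<lambda>xi yi xj yj. (\<alpha> (mu a xi), mu (\<beta> yi) xj, \<beta> yj)) :: _ \<Rightarrow> 'k) \<in> S3 smul"
    proof -
      have "NN r r (\<lambda>xi yi xj yj. (\<alpha> (mu a xi), mu (\<beta> yi) (\<beta> xj), \<beta> (\<beta> yj)))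
        - (NN r r (\<lambda>xi yi xj yj. (\<alpha> (mu a xi), mu (\<beta> yi) xj, \<beta> yj)) :: _ \<Rightarrow> 'k) \<in> S3 smul"
        by (rule NN_inner[where T="\<lambda>xi yi x y. (\<alpha> (mu a xi), mu (\<beta> yi) x, \<beta> y)", OF sep23 hB])
          (rule linL, rule linb)
      moreover have "(\<lambda>xi yi xj yj. (\<alpha> (mu a xi), mu (\<beta> yi) (\<beta> xj), \<beta> (\<beta> yj)))
          = (\<lambda>xi yi xj yj. (mu (\<alpha> a) (\<alpha> xi), \<beta> (mu yi xj), \<beta> (\<beta> yj)))"
        by (simp add: ha hb)
      ultimately show ?thesis by simp
    qed
    have F6a: "NN r r (\<lambda>xi yi xj yj. (\<alpha> (\<alpha> xi), mu (mu yi a) (\<beta> xj), \<beta> (\<beta> yj)))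
        - (NN r r (\<lambda>xi yi xj yj. (\<alpha> (\<alpha> xi), mu (mu yi a) xj, \<beta> yj)) :: _ \<Rightarrow> 'k) \<in> S3 smul"
      by (rule NN_inner[where T="\<lambda>xi yi x y. (\<alpha> (\<alpha> xi), mu (mu yi a) x, \<beta> y)", OF sep23 hB])
        (rule linL, rule linb)
    have F6b: "NN r r (\<lambda>xi yi xj yj. (\<alpha> (\<alpha> xi), mu (mu yi a) (\<beta> xj), \<beta> (\<beta> yj)))
        - (NN r r (\<lambda>xi yi xj yj. (\<alpha> xj, mu yj (mu a xi), \<beta> (\<beta> yi))) :: _ \<Rightarrow> 'k) \<in> S3 smul"
    proof -
      have "NN r r (\<lambda>xi yi xj yj. (\<alpha> (\<alpha> xi), mu (\<alpha> yi) (mu a xj), \<beta> (\<beta> yj)))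
        - (NN r r (\<lambda>xi yi xj yj. (\<alpha> xi, mu yi (mu a xj), \<beta> (\<beta> yj))) :: _ \<Rightarrow> 'k) \<in> S3 smul"
        by (rule NN_outer[where T="\<lambda>xi yi xj yj. (\<alpha> xi, mu yi (mu a xj), \<beta> (\<beta> yj))", OF sep12 hA])
          (rule lina, rule linR)
      moreover have "(\<lambda>xi yi xj yj. (\<alpha> (\<alpha> xi), mu (\<alpha> yi) (mu a xj), \<beta> (\<beta> yj)))
          = (\<lambda>xi yi xj yj. (\<alpha> (\<alpha> xi), mu (mu yi a) (\<beta> xj), \<beta> (\<beta> yj)))"
        by (simp add: assoc)
      moreover have "NN r r (\<lambda>xi yi xj yj. (\<alpha> xi, mu yi (mu a xj), \<beta> (\<beta> yj)))
          = (NN r r (\<lambda>xi yi xj yj. (\<alpha> xj, mu yj (mu a xi), \<beta> (\<beta> yi))) :: _ \<Rightarrow> 'k)"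
        by (subst NN_swap) simp
      ultimately show ?thesis by simp
    qed
    have F7: "NN r r (\<lambda>xi yi xj yj. (\<alpha> (\<alpha> xi), \<alpha> (mu yi xj), mu (\<beta> yj) (\<beta> a)))
        - (NN r r (\<lambda>xi yi xj yj. (\<alpha> xj, mu yj (\<alpha> xi), \<beta> (mu yi a))) :: _ \<Rightarrow> 'k) \<in> S3 smul"
    proof -
      have "NN r r (\<lambda>xi yi xj yj. (\<alpha> (\<alpha> xi), mu (\<alpha> yi) (\<alpha> xj), \<beta> (mu yj a)))
        - (NN r r (\<lambda>xi yi xj yj. (\<alpha> xi, mu yi (\<alpha> xj), \<beta> (mu yj a))) :: _ \<Rightarrow> 'k) \<in> S3 smul"
        by (rule NN_outer[where T="\<lambda>xi yi xj yj. (\<alpha> xi, mu yi (\<alpha> xj), \<beta> (mu yj a))", OF sep12 hA])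
          (rule lina, rule linR)
      moreover have "(\<lambda>xi yi xj yj. (\<alpha> (\<alpha> xi), mu (\<alpha> yi) (\<alpha> xj), \<beta> (mu yj a)))
          = (\<lambda>xi yi xj yj. (\<alpha> (\<alpha> xi), \<alpha> (mu yi xj), mu (\<beta> yj) (\<beta> a)))"
        by (simp add: ha hb)
      moreover have "NN r r (\<lambda>xi yi xj yj. (\<alpha> xi, mu yi (\<alpha> xj), \<beta> (mu yj a)))
          = (NN r r (\<lambda>xi yi xj yj. (\<alpha> xj, mu yj (\<alpha> xi), \<beta> (mu yi a))) :: _ \<Rightarrow> 'k)"
        by (subst NN_swap) simp
      ultimately show ?thesis by simp
    qed
    show "?thesis a"
      unfolding norm_Db norm_aD norm_l norm_r
      by (rule comb[OF F1 F2 F3 F4 F5 F6a F6b F7])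
  qed
  show ?thesis
  proof (intro iffI allI)
    fix a
    assume "\<forall>a. tens3_eq smul (Delta_beta mu \<alpha> \<beta> r a) (alpha_Delta mu \<alpha> \<beta> r a)"
    then have "fsum (Delta_beta mu \<alpha> \<beta> r a) - (fsum (alpha_Delta mu \<alpha> \<beta> r a) :: _ \<Rightarrow> 'k) \<in> S3 smul"
      unfolding tens3_eq_def by blast
    from sp_diff[OF this key[of a]]
    show "tens3_eq smul (lact mu \<alpha> \<beta> a (AYBE mu \<alpha> \<beta> r)) (ract mu \<alpha> \<beta> (AYBE mu \<alpha> \<beta> r) a)"
      unfolding tens3_eq_def by simp
  next
    fix a
    assume "\<forall>a. tens3_eq smul (lact mu \<alpha> \<beta> a (AYBE mu \<alpha> \<beta> r)) (ract mu \<alpha> \<beta> (AYBE mu \<alpha> \<beta> r) a)"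
    then have "fsum (lact mu \<alpha> \<beta> a (AYBE mu \<alpha> \<beta> r)) - (fsum (ract mu \<alpha> \<beta> (AYBE mu \<alpha> \<beta> r) a) :: _ \<Rightarrow> 'k) \<in> S3 smul"
      unfolding tens3_eq_def by blast
    from sp_add[OF key[of a] this]
    show "tens3_eq smul (Delta_beta mu \<alpha> \<beta> r a) (alpha_Delta mu \<alpha> \<beta> r a)"
      unfolding tens3_eq_def by simp
  qed
qed

end
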